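(* Let $G$ be an ordered graph, let $xy\in E(G)$, and let $(i,x)\in\mathbb N\times V(G)$. If $\mathrm{ht}_G(xy)\succ_{\mathrm{lex}}(i,x)$, then there is an edge $xz\in E(G)$ with $\mathrm{ht}_G(xz)=(i,x)$.
   Context: An ordered graph is a finite simple graph $G$ equipped with a total order $\le_G$ on $E(G)$ and a total order $\le^V_G$ on $V(G)$. Let $\mathbb N=\{1,2,\dots\}$. Define $\preceq_{\mathrm{lex}}$ on $\mathbb N\times V(G)$ by $(i,v)\preceq_{\mathrm{lex}}(i',v')$ iff $i<i'$, or $i=i'$ and $v\le^V_G v'$. The height table $\mathrm{HT}(G)$ is a partially filled array indexed by $\mathbb N\times V(G)$, built by going through all $(i,v)$ in $\preceq_{\mathrm{lex}}$-increasing order and setting the entry at $(i,v)$ to be the $\le_G$-largest edge containing $v$ not yet entered into the table (blank if none remain). Every edge is entered exactly once; $\mathrm{ht}_G(e)$ denotes the position of $e$ in $\mathrm{HT}(G)$, written as (row, column). *)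

theory Defs
  imports Main
begin

definition ordered_graph ::
  "'a set \<Rightarrow> 'a set set \<Rightarrow> ('a \<times> 'a) set \<Rightarrow> ('a set \<times> 'a set) set \<Rightarrow> bool" where
  "ordered_graph V E rV rE \<longleftrightarrow>
     finite V \<and>
     E \<subseteq> {{u, v} | u v. u \<in> V \<and> v \<in> V \<and> u \<noteq> v} \<and>
     linear_order_on V rV \<and> linear_order_on E rE"

definition lex_less :: "('a \<times> 'a) set \<Rightarrow> nat \<times> 'a \<Rightarrow> nat \<times> 'a \<Rightarrow> bool" where
  "lex_less rV p q \<longleftrightarrow> fst p < fst q \<or> (fst p = fst q \<and> (snd p, snd q) \<in> rV \<and> snd p \<noteq> snd q)"

definition max_edge :: "('a set \<times> 'a set) set \<Rightarrow> 'a set set \<Rightarrow> 'a set" where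
  "max_edge rE S = (THE m. m \<in> S \<and> (\<forall>e\<in>S. (e, m) \<in> rE))"

text \<open>T is the height table: cells are indexed by positive naturals times vertices; the
  entry at (i,v) is the largest edge containing v not entered at any lex-smaller cell
  (None = blank).\<close>
definition is_height_table ::
  "'a set \<Rightarrow> 'a set set \<Rightarrow> ('a \<times> 'a) set \<Rightarrow> ('a set \<times> 'a set) set
   \<Rightarrow> (nat \<times> 'a \<Rightarrow> 'a set option) \<Rightarrow> bool" where
  "is_height_table V E rV rE T \<longleftrightarrow>
     (\<forall>i v. \<not> (1 \<le> i \<and> v \<in> V) \<longrightarrow> T (i, v) = None) \<and>
     (\<forall>i v. 1 \<le> i \<longrightarrow> v \<in> V \<longrightarrow>
        (let R = E - {e. \<exists>c. lex_less rV c (i, v) \<and> T c = Some e} in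
         T (i, v) = (if \<exists>e\<in>R. v \<in> e then Some (max_edge rE {e \<in> R. v \<in> e}) else None)))"

definition height_table ::
  "'a set \<Rightarrow> 'a set set \<Rightarrow> ('a \<times> 'a) set \<Rightarrow> ('a set \<times> 'a set) set \<Rightarrow> nat \<times> 'a \<Rightarrow> 'a set option" where
  "height_table V E rV rE = (THE T. is_height_table V E rV rE T)"

definition ht ::
  "'a set \<Rightarrow> 'a set set \<Rightarrow> ('a \<times> 'a) set \<Rightarrow> ('a set \<times> 'a set) set \<Rightarrow> 'a set \<Rightarrow> nat \<times> 'a" where
  "ht V E rV rE e = (THE c. height_table V E rV rE c = Some e)"

end

theory Submission
  imports Defs
begin

definition lexr :: "('a \<times> 'a) set \<Rightarrow> ((nat \<times> 'a) \<times> (nat \<times> 'a)) set" where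
  "lexr rV = {(c, d). lex_less rV c d}"

definition hstep where
  "hstep V E rV rE g d = (if 1 \<le> fst d \<and> snd d \<in> V then
     (let R = E - {e. \<exists>c. lex_less rV c d \<and> g c = Some e} in
       if \<exists>e\<in>R. snd d \<in> e then Some (max_edge rE {e \<in> R. snd d \<in> e}) else None) else None)"

lemma og_facts:
  assumes "ordered_graph V E rV rE"
  shows "finite V" "finite E" "rV \<subseteq> V \<times> V" "trans rV" "antisym rV" "total_on V rV"
    "rE \<subseteq> E \<times> E" "trans rE" "antisym rE" "total_on E rE" "refl_on E rE"
    "E \<subseteq> {{u, v} | u v. u \<in> V \<and> v \<in> V \<and> u \<noteq> v}"
proof -
  show "finite V" using assms by (simp add: ordered_graph_def)
  have E: "E \<subseteq> Pow V" using assms by (auto simp: ordered_graph_def)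
  then show "finite E" using \<open>finite V\<close> by (meson finite_Pow_iff rev_finite_subset)
  show "rV \<subseteq> V \<times> V" "trans rV" "antisym rV" "total_on V rV"
    "rE \<subseteq> E \<times> E" "trans rE" "antisym rE" "total_on E rE" "refl_on E rE"
    using assms by (auto simp: ordered_graph_def linear_order_on_def partial_order_on_def
        preorder_on_def refl_on_def)
  show "E \<subseteq> {{u, v} | u v. u \<in> V \<and> v \<in> V \<and> u \<noteq> v}" using assms by (simp add: ordered_graph_def)
qed

lemma wf_lexr:
  assumes "ordered_graph V E rV rE"
  shows "wf (lexr rV)"
proof -
  note f = og_facts[OF assms]
  let ?S = "{(u, v). (u, v) \<in> rV \<and> u \<noteq> v}"
  have fin: "finite ?S" using f(1,3)
    by (metis (no_types, lifting) case_prodE finite_SigmaI mem_Collect_eq rev_finite_subset subrelI subsetD)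
  have tr: "trans ?S" using f(4,5) unfolding trans_def antisym_def by blast
  have "acyclic ?S" unfolding acyclic_irrefl using tr by (simp add: irrefl_def)
  then have "wf ?S" using fin finite_acyclic_wf by blast
  then have "wf (less_than <*lex*> ?S)" by blast
  moreover have "lexr rV \<subseteq> less_than <*lex*> ?S"
    by (auto simp: lexr_def lex_less_def)
  ultimately show ?thesis using wf_subset by blast
qed


lemma max_edge_ex:
  assumes "ordered_graph V E rV rE" "finite S" "S \<noteq> {}" "S \<subseteq> E"
  shows "\<exists>m. m \<in> S \<and> (\<forall>e\<in>S. (e, m) \<in> rE)"
  using assms(2,3,4)
proof (induction S rule: finite_ne_induct)
  case (singleton x)
  then have "(x, x) \<in> rE" using og_facts(11)[OF assms(1)] unfolding refl_on_def by blast
  then show ?case by blast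
next
  case (insert x F)
  then obtain m where m: "m \<in> F" "\<forall>e\<in>F. (e, m) \<in> rE" by auto
  note f = og_facts[OF assms(1)]
  have xE: "x \<in> E" and mE: "m \<in> E" using insert.prems m(1) by auto
  have xx: "(x, x) \<in> rE" using f(11) xE unfolding refl_on_def by blast
  show ?case
  proof (cases "(x, m) \<in> rE")
    case True
    have "\<forall>e\<in>insert x F. (e, m) \<in> rE" using True m(2) by blast
    then show ?thesis using m(1) by blast
  next
    case False
    have "x \<noteq> m" using insert.hyps m(1) by blast
    then have mx: "(m, x) \<in> rE" using f(10) xE mE False unfolding total_on_def by blast
    have "\<forall>e\<in>F. (e, x) \<in> rE"
    proof
      fix e assume "e \<in> F"
      then have "(e, m) \<in> rE" using m(2) by blast
      then show "(e, x) \<in> rE" using mx f(8) unfolding trans_def by blast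
    qed
    then have "\<forall>e\<in>insert x F. (e, x) \<in> rE" using xx by blast
    then show ?thesis by blast
  qed
qed

lemma max_edge_in:
  assumes "ordered_graph V E rV rE" "finite S" "S \<noteq> {}" "S \<subseteq> E"
  shows "max_edge rE S \<in> S"
proof -
  obtain m where m: "m \<in> S" "\<forall>e\<in>S. (e, m) \<in> rE" using max_edge_ex[OF assms] by blast
  have u: "\<exists>!m. m \<in> S \<and> (\<forall>e\<in>S. (e, m) \<in> rE)"
  proof
    show "m \<in> S \<and> (\<forall>e\<in>S. (e, m) \<in> rE)" using m by blast
  next
    fix m' assume "m' \<in> S \<and> (\<forall>e\<in>S. (e, m') \<in> rE)"
    then show "m' = m" using m og_facts(9)[OF assms(1)] unfolding antisym_def by blast
  qed
  have "(THE m. m \<in> S \<and> (\<forall>e\<in>S. (e, m) \<in> rE)) \<in> S \<and> (\<forall>e\<in>S. (e, THE m. m \<in> S \<and> (\<forall>e\<in>S. (e, m) \<in> rE)) \<in> rE)"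
    by (rule theI'[OF u])
  then show ?thesis unfolding max_edge_def by (rule conjunct1)
qed

lemma ht_exists:
  assumes "ordered_graph V E rV rE"
  shows "is_height_table V E rV rE (wfrec (lexr rV) (hstep V E rV rE))"
proof -
  define T where "T = wfrec (lexr rV) (hstep V E rV rE)"
  have eq: "T d = hstep V E rV rE (cut T (lexr rV) d) d" for d
    unfolding T_def by (rule wfrec[OF wf_lexr[OF assms]])
  have cs: "{e. \<exists>c. lex_less rV c d \<and> cut T (lexr rV) d c = Some e}
          = {e. \<exists>c. lex_less rV c d \<and> T c = Some e}" for d
  proof -
    have H: "\<And>c. lex_less rV c d \<Longrightarrow> cut T (lexr rV) d c = T c" by (simp add: cut_apply lexr_def)
    show ?thesis
    proof (intro Collect_cong iffI)
      fix e assume "\<exists>c. lex_less rV c d \<and> cut T (lexr rV) d c = Some e"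
      then obtain c where c: "lex_less rV c d" "cut T (lexr rV) d c = Some e" by blast
      then show "\<exists>c. lex_less rV c d \<and> T c = Some e" using H[OF c(1)] by (intro exI[of _ c]) simp
    next
      fix e assume "\<exists>c. lex_less rV c d \<and> T c = Some e"
      then obtain c where c: "lex_less rV c d" "T c = Some e" by blast
      then show "\<exists>c. lex_less rV c d \<and> cut T (lexr rV) d c = Some e" using H[OF c(1)] by (intro exI[of _ c]) simp
    qed
  qed
  show ?thesis unfolding is_height_table_def T_def[symmetric]
  proof (intro conjI allI impI)
    fix i :: nat and v assume "\<not> (1 \<le> i \<and> v \<in> V)"
    then have "hstep V E rV rE (cut T (lexr rV) (i, v)) (i, v) = None" unfolding hstep_def
      by (intro if_not_P) simp
    then show "T (i, v) = None" by (rule trans[OF eq])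
  next
    fix i v assume iv: "1 \<le> (i::nat)" "v \<in> V"
    then show "let R = E - {e. \<exists>c. lex_less rV c (i, v) \<and> T c = Some e}
           in T (i, v) = (if \<exists>e\<in>R. v \<in> e then Some (max_edge rE {e \<in> R. v \<in> e}) else None)"
    proof -
      have "T (i, v) = hstep V E rV rE (cut T (lexr rV) (i, v)) (i, v)" by (rule eq)
      also have "\<dots> = (let R = E - {e. \<exists>c. lex_less rV c (i, v) \<and> cut T (lexr rV) (i, v) c = Some e}
           in (if \<exists>e\<in>R. v \<in> e then Some (max_edge rE {e \<in> R. v \<in> e}) else None))"
        unfolding hstep_def fst_conv snd_conv by (intro if_P) (use iv in simp)
      finally show ?thesis unfolding cs Let_def .
    qed
  qed
qed

lemma iht_None:
  "is_height_table V E rV rE T \<Longrightarrow> \<not> (1 \<le> i \<and> v \<in> V) \<Longrightarrow> T (i, v) = None"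
proof -
  assume a: "is_height_table V E rV rE T" "\<not> (1 \<le> i \<and> v \<in> V)"
  have "\<forall>i v. \<not> (1 \<le> i \<and> v \<in> V) \<longrightarrow> T (i, v) = None"
    using a(1) unfolding is_height_table_def by (rule conjunct1)
  then show ?thesis using a(2) by blast
qed

lemma iht_val:
  "is_height_table V E rV rE T \<Longrightarrow> 1 \<le> i \<Longrightarrow> v \<in> V \<Longrightarrow>
   T (i, v) = (let R = E - {e. \<exists>c. lex_less rV c (i, v) \<and> T c = Some e} in
         (if \<exists>e\<in>R. v \<in> e then Some (max_edge rE {e \<in> R. v \<in> e}) else None))"
proof -
  assume a: "is_height_table V E rV rE T" "1 \<le> i" "v \<in> V"
  have "\<forall>i v. 1 \<le> i \<longrightarrow> v \<in> V \<longrightarrow>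
        (let R = E - {e. \<exists>c. lex_less rV c (i, v) \<and> T c = Some e} in
         T (i, v) = (if \<exists>e\<in>R. v \<in> e then Some (max_edge rE {e \<in> R. v \<in> e}) else None))"
    using a(1) unfolding is_height_table_def by (rule conjunct2)
  then have "let R = E - {e. \<exists>c. lex_less rV c (i, v) \<and> T c = Some e} in
         T (i, v) = (if \<exists>e\<in>R. v \<in> e then Some (max_edge rE {e \<in> R. v \<in> e}) else None)"
    using a(2,3) by blast
  then show ?thesis unfolding Let_def .
qed

lemma ht_unique:
  assumes "ordered_graph V E rV rE" "is_height_table V E rV rE T1" "is_height_table V E rV rE T2"
  shows "T1 = T2"
proof
  fix d show "T1 d = T2 d"
    using wf_lexr[OF assms(1)]
  proof (induction d rule: wf_induct_rule)
    case (less d)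
    obtain i v where d: "d = (i, v)" by fastforce
    show ?case
    proof (cases "1 \<le> i \<and> v \<in> V")
      case False
      then show ?thesis using iht_None[OF assms(2) False] iht_None[OF assms(3) False] d by simp
    next
      case True
      have st: "{e. \<exists>c. lex_less rV c (i, v) \<and> T1 c = Some e} = {e. \<exists>c. lex_less rV c (i, v) \<and> T2 c = Some e}"
      proof -
        have H: "\<And>c. lex_less rV c (i, v) \<Longrightarrow> T1 c = T2 c" using less d by (simp add: lexr_def)
        show ?thesis
        proof (intro Collect_cong iffI)
          fix e assume "\<exists>c. lex_less rV c (i, v) \<and> T1 c = Some e"
          then obtain c where c: "lex_less rV c (i, v)" "T1 c = Some e" by blast
          then show "\<exists>c. lex_less rV c (i, v) \<and> T2 c = Some e" using H[OF c(1)] by (intro exI[of _ c]) simp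
        next
          fix e assume "\<exists>c. lex_less rV c (i, v) \<and> T2 c = Some e"
          then obtain c where c: "lex_less rV c (i, v)" "T2 c = Some e" by blast
          then show "\<exists>c. lex_less rV c (i, v) \<and> T1 c = Some e" using H[OF c(1)] by (intro exI[of _ c]) simp
        qed
      qed
      show ?thesis unfolding d iht_val[OF assms(2) conjunct1[OF True] conjunct2[OF True]]
          iht_val[OF assms(3) conjunct1[OF True] conjunct2[OF True]] st ..
    qed
  qed
qed

lemma height_table_is:
  assumes "ordered_graph V E rV rE"
  shows "is_height_table V E rV rE (height_table V E rV rE)"
  unfolding height_table_def
proof (rule theI[of _ "wfrec (lexr rV) (hstep V E rV rE)"])
  show "is_height_table V E rV rE (wfrec (lexr rV) (hstep V E rV rE))" by (rule ht_exists[OF assms])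
  fix T assume "is_height_table V E rV rE T"
  then show "T = wfrec (lexr rV) (hstep V E rV rE)" by (rule ht_unique[OF assms _ ht_exists[OF assms]])
qed


lemma edge_form:
  assumes "ordered_graph V E rV rE" "e \<in> E"
  shows "\<exists>u v. e = {u, v} \<and> u \<in> V \<and> v \<in> V \<and> u \<noteq> v"
proof -
  have "e \<in> {{u, v} | u v. u \<in> V \<and> v \<in> V \<and> u \<noteq> v}" using og_facts(12)[OF assms(1)] assms(2) by (rule subsetD)
  then show ?thesis by (simp only: mem_Collect_eq)
qed

lemma lex_asym:
  assumes "ordered_graph V E rV rE" "lex_less rV c d"
  shows "\<not> lex_less rV d c"
proof
  assume d: "lex_less rV d c"
  show False
  proof (cases "fst c = fst d")
    case True
    then have "(snd c, snd d) \<in> rV" "(snd d, snd c) \<in> rV" "snd c \<noteq> snd d"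
      using assms(2) d unfolding lex_less_def by auto
    then show False using og_facts(5)[OF assms(1)] unfolding antisym_def by blast
  next
    case False
    then show False using assms(2) d unfolding lex_less_def by linarith
  qed
qed

lemma lex_total:
  assumes "ordered_graph V E rV rE" "snd c \<in> V" "snd d \<in> V" "c \<noteq> d"
  shows "lex_less rV c d \<or> lex_less rV d c"
proof (cases "fst c = fst d")
  case True
  then have "snd c \<noteq> snd d" using assms(4) by (simp add: prod_eq_iff)
  then have "(snd c, snd d) \<in> rV \<or> (snd d, snd c) \<in> rV"
    using assms(2,3) og_facts(6)[OF assms(1)] unfolding total_on_def by blast
  then show ?thesis using True \<open>snd c \<noteq> snd d\<close> unfolding lex_less_def by auto
next
  case False
  then show ?thesis unfolding lex_less_def by linarith
qed

lemma entry_valid: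
  assumes "ordered_graph V E rV rE" "height_table V E rV rE c = Some e"
  shows "1 \<le> fst c \<and> snd c \<in> V"
proof (rule ccontr)
  assume "\<not> (1 \<le> fst c \<and> snd c \<in> V)"
  then have "height_table V E rV rE (fst c, snd c) = None" by (rule iht_None[OF height_table_is[OF assms(1)]])
  then show False using assms(2) by simp
qed

lemma entry_props:
  assumes G: "ordered_graph V E rV rE" and c: "height_table V E rV rE c = Some e"
  shows "e \<in> E \<and> snd c \<in> e \<and> \<not> (\<exists>c'. lex_less rV c' c \<and> height_table V E rV rE c' = Some e)"
proof -
  define T where "T = height_table V E rV rE"
  obtain i v where cv: "c = (i, v)" by fastforce
  have iv: "1 \<le> i" "v \<in> V" using entry_valid[OF G c] cv by auto
  define R where "R = E - {e. \<exists>c. lex_less rV c (i, v) \<and> T c = Some e}"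
  have Tc: "T (i, v) = (if \<exists>e\<in>R. v \<in> e then Some (max_edge rE {e \<in> R. v \<in> e}) else None)"
    unfolding T_def R_def by (rule iht_val[OF height_table_is[OF G] iv, unfolded Let_def])
  have ex: "\<exists>e\<in>R. v \<in> e"
  proof (rule ccontr)
    assume "\<not> (\<exists>e\<in>R. v \<in> e)"
    then have "T (i, v) = None" using Tc by simp
    then show False using c cv T_def by simp
  qed
  then have eq: "e = max_edge rE {e \<in> R. v \<in> e}" using Tc c cv T_def by simp
  have "finite {e \<in> R. v \<in> e}" using og_facts(2)[OF G] R_def by simp
  moreover have "{e \<in> R. v \<in> e} \<noteq> {}" using ex by blast
  moreover have "{e \<in> R. v \<in> e} \<subseteq> E" using R_def by blast
  ultimately have "e \<in> {e \<in> R. v \<in> e}" using max_edge_in[OF G] eq by blast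
  then show ?thesis unfolding R_def T_def cv by simp
qed

lemma entry_inj:
  assumes G: "ordered_graph V E rV rE" and c: "height_table V E rV rE c = Some e"
    and d: "height_table V E rV rE d = Some e"
  shows "c = d"
proof (rule ccontr)
  assume "c \<noteq> d"
  then have "lex_less rV c d \<or> lex_less rV d c"
  proof -
    have "snd c \<in> V" "snd d \<in> V" using entry_valid[OF G c] entry_valid[OF G d] by simp_all
    then show ?thesis using lex_total[OF G] \<open>c \<noteq> d\<close> by blast
  qed
  then show False
  proof
    assume "lex_less rV c d"
    moreover have "\<not> (\<exists>c'. lex_less rV c' d \<and> height_table V E rV rE c' = Some e)"
      using entry_props[OF G d] by (rule conjunct2[OF conjunct2])
    ultimately show False using c by blast
  next
    assume "lex_less rV d c"
    moreover have "\<not> (\<exists>c'. lex_less rV c' c \<and> height_table V E rV rE c' = Some e)"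
      using entry_props[OF G c] by (rule conjunct2[OF conjunct2])
    ultimately show False using d by blast
  qed
qed

lemma ht_eq:
  assumes G: "ordered_graph V E rV rE" and c: "height_table V E rV rE c = Some e"
  shows "ht V E rV rE e = c"
  unfolding ht_def
proof (rule the_equality)
  show "height_table V E rV rE c = Some e" by (rule c)
  fix c' assume "height_table V E rV rE c' = Some e"
  then show "c' = c" by (rule entry_inj[OF G _ c])
qed

lemma all_entered:
  assumes G: "ordered_graph V E rV rE" and e: "e \<in> E"
  shows "\<exists>c. height_table V E rV rE c = Some e"
proof (rule ccontr)
  assume ne: "\<not> ?thesis"
  define T where "T = height_table V E rV rE"
  obtain u w where uw: "e = {u, w}" "u \<in> V" using edge_form[OF G e] by blast
  have some: "T (Suc i, u) \<noteq> None" for i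
  proof -
    define R where "R = E - {e. \<exists>c. lex_less rV c (Suc i, u) \<and> T c = Some e}"
    have Tc: "T (Suc i, u) = (if \<exists>e\<in>R. u \<in> e then Some (max_edge rE {e \<in> R. u \<in> e}) else None)"
      unfolding T_def R_def by (rule iht_val[OF height_table_is[OF G] _ uw(2), unfolded Let_def]) simp
    have "e \<in> R" using ne e unfolding R_def T_def by blast
    then have "\<exists>e\<in>R. u \<in> e" using uw by blast
    then show ?thesis using Tc by simp
  qed
  define m where "m i = the (T (Suc i, u))" for i
  have Tm: "T (Suc i, u) = Some (m i)" for i using some[of i] m_def by auto
  have "m i \<in> E" for i using entry_props[OF G Tm[unfolded T_def]] by blast
  then have "range m \<subseteq> E" by blast
  then have "finite (range m)" using og_facts(2)[OF G] finite_subset by blast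
  moreover have "inj m"
  proof
    fix i j assume "m i = m j"
    then have "(Suc i, u) = (Suc j, u)" using entry_inj[OF G Tm[unfolded T_def, of i]] Tm[unfolded T_def, of j]
      by simp
    then show "i = j" by simp
  qed
  ultimately have "finite (UNIV :: nat set)" using finite_imageD by blast
  then show False by simp
qed

theorem mainTheorem12:
  fixes V :: "'a set" and E :: "'a set set"
    and rV :: "('a \<times> 'a) set" and rE :: "('a set \<times> 'a set) set"
    and x y :: 'a and i :: nat
  assumes G: "ordered_graph V E rV rE"
    and xy: "{x, y} \<in> E"
    and i: "1 \<le> i" and x: "x \<in> V"
    and gt: "lex_less rV (i, x) (ht V E rV rE {x, y})"
  shows "\<exists>z. {x, z} \<in> E \<and> ht V E rV rE {x, z} = (i, x)"
proof -
  define T where "T = height_table V E rV rE"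
  obtain c0 where c0: "T c0 = Some {x, y}" using all_entered[OF G xy] T_def by blast
  have hc0: "ht V E rV rE {x, y} = c0" using ht_eq[OF G c0[unfolded T_def]] .
  define R where "R = E - {e. \<exists>c. lex_less rV c (i, x) \<and> T c = Some e}"
  have Tc: "T (i, x) = (if \<exists>e\<in>R. x \<in> e then Some (max_edge rE {e \<in> R. x \<in> e}) else None)"
    unfolding T_def R_def by (rule iht_val[OF height_table_is[OF G] i x, unfolded Let_def])
  have "{x, y} \<in> R"
  proof -
    have "\<not> (\<exists>c. lex_less rV c (i, x) \<and> T c = Some {x, y})"
    proof
      assume "\<exists>c. lex_less rV c (i, x) \<and> T c = Some {x, y}"
      then obtain c where "lex_less rV c (i, x)" "T c = Some {x, y}" by blast
      then have "c = c0" using entry_inj[OF G _ c0[unfolded T_def]] T_def by blast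
      then show False using lex_asym[OF G gt] hc0 \<open>lex_less rV c (i, x)\<close> by simp
    qed
    then show ?thesis using xy R_def by blast
  qed
  then have "\<exists>e\<in>R. x \<in> e" by blast
  then have "T (i, x) = Some (max_edge rE {e \<in> R. x \<in> e})" using Tc by simp
  then obtain m where m: "T (i, x) = Some m" by blast
  have "m \<in> E" "x \<in> m" using entry_props[OF G m[unfolded T_def]] by auto
  then obtain u v where uv: "m = {u, v}" using edge_form[OF G] by blast
  obtain z where "m = {x, z}"
  proof (cases "x = u")
    case True then show ?thesis using that uv by simp
  next
    case False then have "x = v" using uv \<open>x \<in> m\<close> by simp
    then show ?thesis using that[of u] uv by (simp add: insert_commute)
  qed
  moreover have "ht V E rV rE m = (i, x)" using ht_eq[OF G m[unfolded T_def]] .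
  ultimately show ?thesis using \<open>m \<in> E\<close> by blast
qed

end
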